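(* Let $e_1<e_2<e_3<e_4$ be distinct reals. On $T^*S^3=\{(\mathbf x,\mathbf y)\in\mathbb R^8:\mathbf x\cdot\mathbf x=1,\mathbf x\cdot\mathbf y=0\}$ let $\ell_{ij}=x_iy_j-x_jy_i$, let $F_i=\sum_{j\ne i}\frac{\ell_{ij}^2}{e_i-e_j}$ ($i=1,\dots,4$, with $\ell_{ji}=-\ell_{ij}$) be the Uhlenbeck integrals, and let $\eta_1=\sum_{i<j}\ell_{ij}^2\sum_{k\ne i,j}e_k$, $\eta_2=\sum_{i<j}\ell_{ij}^2\prod_{k\ne i,j}e_k$. On the energy level $2H=\mathbf y\cdot\mathbf y=1$, $F_i=0$ if and only if $\eta_2-e_i(\eta_1-e_i)=0$; i.e. $F_i$ vanishes exactly along the line $\mathcal L_i:\eta_2-e_i(\eta_1-e_i)=0$.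
   Context: The condition $2H=1$ (i.e. $\sum_{i<j}\ell_{ij}^2=1$) is the normalisation used for the line $\mathcal L_i$. *)

theory Defs
  imports Complex_Main
begin

text \<open>Points of R^8 are pairs of coordinate functions x, y indexed by 1..4.\<close>

definition ell :: "(nat \<Rightarrow> real) \<Rightarrow> (nat \<Rightarrow> real) \<Rightarrow> nat \<Rightarrow> nat \<Rightarrow> real" where
  "ell x y i j = x i * y j - x j * y i"

definition uhlF :: "(nat \<Rightarrow> real) \<Rightarrow> (nat \<Rightarrow> real) \<Rightarrow> (nat \<Rightarrow> real) \<Rightarrow> nat \<Rightarrow> real" where
  "uhlF e x y i = (\<Sum>j\<in>{1..4} - {i}. (ell x y i j)\<^sup>2 / (e i - e j))"

definition eta1 :: "(nat \<Rightarrow> real) \<Rightarrow> (nat \<Rightarrow> real) \<Rightarrow> (nat \<Rightarrow> real) \<Rightarrow> real" where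
  "eta1 e x y = (\<Sum>(i,j)\<in>{(i,j). 1 \<le> i \<and> i < j \<and> j \<le> 4}.
      (ell x y i j)\<^sup>2 * (\<Sum>k\<in>{1..4} - {i,j}. e k))"

definition eta2 :: "(nat \<Rightarrow> real) \<Rightarrow> (nat \<Rightarrow> real) \<Rightarrow> (nat \<Rightarrow> real) \<Rightarrow> real" where
  "eta2 e x y = (\<Sum>(i,j)\<in>{(i,j). 1 \<le> i \<and> i < j \<and> j \<le> 4}.
      (ell x y i j)\<^sup>2 * (\<Prod>k\<in>{1..4} - {i,j}. e k))"

end

theory Submission
  imports Defs
begin

lemma four_set: "{1..4::nat} = {1,2,3,4}" by auto

lemma pairs_set: "{(i,j). 1 \<le> i \<and> i < j \<and> j \<le> (4::nat)} = {(1,2),(1,3),(1,4),(2,3),(2,4),(3,4)}"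
  by auto

lemma eta1_exp: "eta1 e x y = (ell x y 1 2)\<^sup>2 * (e 3 + e 4) + (ell x y 1 3)\<^sup>2 * (e 2 + e 4)
   + (ell x y 1 4)\<^sup>2 * (e 2 + e 3) + (ell x y 2 3)\<^sup>2 * (e 1 + e 4)
   + (ell x y 2 4)\<^sup>2 * (e 1 + e 3) + (ell x y 3 4)\<^sup>2 * (e 1 + e 2)"
  unfolding eta1_def pairs_set four_set by (simp add: insert_Diff_if algebra_simps)

lemma eta2_exp: "eta2 e x y = (ell x y 1 2)\<^sup>2 * (e 3 * e 4) + (ell x y 1 3)\<^sup>2 * (e 2 * e 4)
   + (ell x y 1 4)\<^sup>2 * (e 2 * e 3) + (ell x y 2 3)\<^sup>2 * (e 1 * e 4)
   + (ell x y 2 4)\<^sup>2 * (e 1 * e 3) + (ell x y 3 4)\<^sup>2 * (e 1 * e 2)"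
  unfolding eta2_def pairs_set four_set by (simp add: insert_Diff_if algebra_simps)

lemma ell_swap: "ell x y j i = - ell x y i j" by (simp add: ell_def)

lemma alg: "d2 \<noteq> 0 \<Longrightarrow> d3 \<noteq> 0 \<Longrightarrow> d4 \<noteq> (0::real) \<Longrightarrow>
  (a/d2 + b/d3 + c/d4) * (d2*d3*d4) = a*(d3*d4) + b*(d2*d4) + c*(d2*d3)"
  by (simp add: field_simps)

lemma gen1: fixes l12 l13 l14 l23 l24 l34 e1 e2 e3 e4 :: real
  shows "(l12\<^sup>2 * (e3 * e4)+l13\<^sup>2 * (e2 * e4)+l14\<^sup>2 * (e2 * e3)+l23\<^sup>2 * (e1 * e4)+l24\<^sup>2 * (e1 * e3)+l34\<^sup>2 * (e1 * e2)) - e1 * ((l12\<^sup>2 * (e3 + e4)+l13\<^sup>2 * (e2 + e4)+l14\<^sup>2 * (e2 + e3)+l23\<^sup>2 * (e1 + e4)+l24\<^sup>2 * (e1 + e3)+l34\<^sup>2 * (e1 + e2)) - e1) = l12\<^sup>2 * ((e1 - e3) * (e1 - e4)) + l13\<^sup>2 * ((e1 - e2) * (e1 - e4)) + l14\<^sup>2 * ((e1 - e2) * (e1 - e3)) - e1\<^sup>2 * (l12\<^sup>2+l13\<^sup>2+l14\<^sup>2+l23\<^sup>2+l24\<^sup>2+l34\<^sup>2 - 1)"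
  by (simp add: algebra_simps power2_eq_square)

lemma gen2: fixes l12 l13 l14 l23 l24 l34 e1 e2 e3 e4 :: real
  shows "(l12\<^sup>2 * (e3 * e4)+l13\<^sup>2 * (e2 * e4)+l14\<^sup>2 * (e2 * e3)+l23\<^sup>2 * (e1 * e4)+l24\<^sup>2 * (e1 * e3)+l34\<^sup>2 * (e1 * e2)) - e2 * ((l12\<^sup>2 * (e3 + e4)+l13\<^sup>2 * (e2 + e4)+l14\<^sup>2 * (e2 + e3)+l23\<^sup>2 * (e1 + e4)+l24\<^sup>2 * (e1 + e3)+l34\<^sup>2 * (e1 + e2)) - e2) = l12\<^sup>2 * ((e2 - e3) * (e2 - e4)) + l23\<^sup>2 * ((e2 - e1) * (e2 - e4)) + l24\<^sup>2 * ((e2 - e1) * (e2 - e3)) - e2\<^sup>2 * (l12\<^sup>2+l13\<^sup>2+l14\<^sup>2+l23\<^sup>2+l24\<^sup>2+l34\<^sup>2 - 1)"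
  by (simp add: algebra_simps power2_eq_square)

lemma gen3: fixes l12 l13 l14 l23 l24 l34 e1 e2 e3 e4 :: real
  shows "(l12\<^sup>2 * (e3 * e4)+l13\<^sup>2 * (e2 * e4)+l14\<^sup>2 * (e2 * e3)+l23\<^sup>2 * (e1 * e4)+l24\<^sup>2 * (e1 * e3)+l34\<^sup>2 * (e1 * e2)) - e3 * ((l12\<^sup>2 * (e3 + e4)+l13\<^sup>2 * (e2 + e4)+l14\<^sup>2 * (e2 + e3)+l23\<^sup>2 * (e1 + e4)+l24\<^sup>2 * (e1 + e3)+l34\<^sup>2 * (e1 + e2)) - e3) = l13\<^sup>2 * ((e3 - e2) * (e3 - e4)) + l23\<^sup>2 * ((e3 - e1) * (e3 - e4)) + l34\<^sup>2 * ((e3 - e1) * (e3 - e2)) - e3\<^sup>2 * (l12\<^sup>2+l13\<^sup>2+l14\<^sup>2+l23\<^sup>2+l24\<^sup>2+l34\<^sup>2 - 1)"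
  by (simp add: algebra_simps power2_eq_square)

lemma gen4: fixes l12 l13 l14 l23 l24 l34 e1 e2 e3 e4 :: real
  shows "(l12\<^sup>2 * (e3 * e4)+l13\<^sup>2 * (e2 * e4)+l14\<^sup>2 * (e2 * e3)+l23\<^sup>2 * (e1 * e4)+l24\<^sup>2 * (e1 * e3)+l34\<^sup>2 * (e1 * e2)) - e4 * ((l12\<^sup>2 * (e3 + e4)+l13\<^sup>2 * (e2 + e4)+l14\<^sup>2 * (e2 + e3)+l23\<^sup>2 * (e1 + e4)+l24\<^sup>2 * (e1 + e3)+l34\<^sup>2 * (e1 + e2)) - e4) = l14\<^sup>2 * ((e4 - e2) * (e4 - e3)) + l24\<^sup>2 * ((e4 - e1) * (e4 - e3)) + l34\<^sup>2 * ((e4 - e1) * (e4 - e2)) - e4\<^sup>2 * (l12\<^sup>2+l13\<^sup>2+l14\<^sup>2+l23\<^sup>2+l24\<^sup>2+l34\<^sup>2 - 1)"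
  by (simp add: algebra_simps power2_eq_square)

theorem corollary2:
  fixes e x y :: "nat \<Rightarrow> real" and i :: nat
  assumes "e 1 < e 2" and "e 2 < e 3" and "e 3 < e 4"
    and "(\<Sum>k=1..4. x k * x k) = 1"
    and "(\<Sum>k=1..4. x k * y k) = 0"
    and "(\<Sum>k=1..4. y k * y k) = 1"
    and "i \<in> {1..4}"
  shows "uhlF e x y i = 0 \<longleftrightarrow> eta2 e x y - e i * (eta1 e x y - e i) = 0"
proof -
  have xx: "x 1 * x 1 + x 2 * x 2 + x 3 * x 3 + x 4 * x 4 = 1" using assms(4) unfolding four_set by simp
  have xy: "x 1 * y 1 + x 2 * y 2 + x 3 * y 3 + x 4 * y 4 = 0" using assms(5) unfolding four_set by simp
  have yy: "y 1 * y 1 + y 2 * y 2 + y 3 * y 3 + y 4 * y 4 = 1" using assms(6) unfolding four_set by simp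
  have Sid: "(ell x y 1 2)\<^sup>2 + (ell x y 1 3)\<^sup>2 + (ell x y 1 4)\<^sup>2 + (ell x y 2 3)\<^sup>2
     + (ell x y 2 4)\<^sup>2 + (ell x y 3 4)\<^sup>2
     = (x 1 * x 1 + x 2 * x 2 + x 3 * x 3 + x 4 * x 4) * (y 1 * y 1 + y 2 * y 2 + y 3 * y 3 + y 4 * y 4)
       - (x 1 * y 1 + x 2 * y 2 + x 3 * y 3 + x 4 * y 4)\<^sup>2"
    unfolding ell_def power2_eq_square by (simp add: algebra_simps)
  have S: "(ell x y 1 2)\<^sup>2 + (ell x y 1 3)\<^sup>2 + (ell x y 1 4)\<^sup>2 + (ell x y 2 3)\<^sup>2
     + (ell x y 2 4)\<^sup>2 + (ell x y 3 4)\<^sup>2 = 1" using Sid xx xy yy by simp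
  have d12: "e 1 - e 2 \<noteq> 0" "e 1 - e 3 \<noteq> 0" "e 1 - e 4 \<noteq> 0"
     "e 2 - e 1 \<noteq> 0" "e 2 - e 3 \<noteq> 0" "e 2 - e 4 \<noteq> 0"
     "e 3 - e 1 \<noteq> 0" "e 3 - e 2 \<noteq> 0" "e 3 - e 4 \<noteq> 0"
     "e 4 - e 1 \<noteq> 0" "e 4 - e 2 \<noteq> 0" "e 4 - e 3 \<noteq> 0" using assms(1-3) by auto
  have ii: "i = 1 \<or> i = 2 \<or> i = 3 \<or> i = 4" using assms(7) by auto
  define E where "E = eta2 e x y - e i * (eta1 e x y - e i)"
  have key: "E = uhlF e x y i * (\<Prod>j\<in>{1..4} - {i}. (e i - e j))"
    using ii
  proof (elim disjE)
    assume ik: "i = 1"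
    have U: "uhlF e x y i = (ell x y 1 2)\<^sup>2 / (e 1 - e 2) + (ell x y 1 3)\<^sup>2 / (e 1 - e 3) + (ell x y 1 4)\<^sup>2 / (e 1 - e 4)"
      unfolding uhlF_def four_set ik by (simp add: insert_Diff_if)
    have Pr: "(\<Prod>j\<in>{1..4} - {i}. (e i - e j)) = (e 1 - e 2) * (e 1 - e 3) * (e 1 - e 4)"
      unfolding four_set ik by (simp add: insert_Diff_if)
    have R: "uhlF e x y i * (\<Prod>j\<in>{1..4} - {i}. (e i - e j)) = (ell x y 1 2)\<^sup>2 * (((e 1) - (e 3)) * ((e 1) - (e 4))) + (ell x y 1 3)\<^sup>2 * (((e 1) - (e 2)) * ((e 1) - (e 4))) + (ell x y 1 4)\<^sup>2 * (((e 1) - (e 2)) * ((e 1) - (e 3)))"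
      unfolding U Pr  using d12 by (simp add: alg)
    have G: "((ell x y 1 2)\<^sup>2 * ((e 3) * (e 4))+(ell x y 1 3)\<^sup>2 * ((e 2) * (e 4))+(ell x y 1 4)\<^sup>2 * ((e 2) * (e 3))+(ell x y 2 3)\<^sup>2 * ((e 1) * (e 4))+(ell x y 2 4)\<^sup>2 * ((e 1) * (e 3))+(ell x y 3 4)\<^sup>2 * ((e 1) * (e 2))) - (e 1) * (((ell x y 1 2)\<^sup>2 * ((e 3) + (e 4))+(ell x y 1 3)\<^sup>2 * ((e 2) + (e 4))+(ell x y 1 4)\<^sup>2 * ((e 2) + (e 3))+(ell x y 2 3)\<^sup>2 * ((e 1) + (e 4))+(ell x y 2 4)\<^sup>2 * ((e 1) + (e 3))+(ell x y 3 4)\<^sup>2 * ((e 1) + (e 2))) - (e 1)) = (ell x y 1 2)\<^sup>2 * (((e 1) - (e 3)) * ((e 1) - (e 4))) + (ell x y 1 3)\<^sup>2 * (((e 1) - (e 2)) * ((e 1) - (e 4))) + (ell x y 1 4)\<^sup>2 * (((e 1) - (e 2)) * ((e 1) - (e 3))) - (e 1)\<^sup>2 * ((ell x y 1 2)\<^sup>2+(ell x y 1 3)\<^sup>2+(ell x y 1 4)\<^sup>2+(ell x y 2 3)\<^sup>2+(ell x y 2 4)\<^sup>2+(ell x y 3 4)\<^sup>2 - 1)" by (rule gen1)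
    show ?thesis unfolding R unfolding E_def eta1_exp eta2_exp ik G using S by simp
  next
    assume ik: "i = 2"
    have U: "uhlF e x y i = (ell x y 2 1)\<^sup>2 / (e 2 - e 1) + (ell x y 2 3)\<^sup>2 / (e 2 - e 3) + (ell x y 2 4)\<^sup>2 / (e 2 - e 4)"
      unfolding uhlF_def four_set ik by (simp add: insert_Diff_if)
    have Pr: "(\<Prod>j\<in>{1..4} - {i}. (e i - e j)) = (e 2 - e 1) * (e 2 - e 3) * (e 2 - e 4)"
      unfolding four_set ik by (simp add: insert_Diff_if)
    have sw: "ell x y 2 1 = - ell x y 1 2" by (simp_all add: ell_def)
    have R: "uhlF e x y i * (\<Prod>j\<in>{1..4} - {i}. (e i - e j)) = (ell x y 1 2)\<^sup>2 * (((e 2) - (e 3)) * ((e 2) - (e 4))) + (ell x y 2 3)\<^sup>2 * (((e 2) - (e 1)) * ((e 2) - (e 4))) + (ell x y 2 4)\<^sup>2 * (((e 2) - (e 1)) * ((e 2) - (e 3)))"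
      unfolding U Pr sw using d12 by (simp add: alg)
    have G: "((ell x y 1 2)\<^sup>2 * ((e 3) * (e 4))+(ell x y 1 3)\<^sup>2 * ((e 2) * (e 4))+(ell x y 1 4)\<^sup>2 * ((e 2) * (e 3))+(ell x y 2 3)\<^sup>2 * ((e 1) * (e 4))+(ell x y 2 4)\<^sup>2 * ((e 1) * (e 3))+(ell x y 3 4)\<^sup>2 * ((e 1) * (e 2))) - (e 2) * (((ell x y 1 2)\<^sup>2 * ((e 3) + (e 4))+(ell x y 1 3)\<^sup>2 * ((e 2) + (e 4))+(ell x y 1 4)\<^sup>2 * ((e 2) + (e 3))+(ell x y 2 3)\<^sup>2 * ((e 1) + (e 4))+(ell x y 2 4)\<^sup>2 * ((e 1) + (e 3))+(ell x y 3 4)\<^sup>2 * ((e 1) + (e 2))) - (e 2)) = (ell x y 1 2)\<^sup>2 * (((e 2) - (e 3)) * ((e 2) - (e 4))) + (ell x y 2 3)\<^sup>2 * (((e 2) - (e 1)) * ((e 2) - (e 4))) + (ell x y 2 4)\<^sup>2 * (((e 2) - (e 1)) * ((e 2) - (e 3))) - (e 2)\<^sup>2 * ((ell x y 1 2)\<^sup>2+(ell x y 1 3)\<^sup>2+(ell x y 1 4)\<^sup>2+(ell x y 2 3)\<^sup>2+(ell x y 2 4)\<^sup>2+(ell x y 3 4)\<^sup>2 - 1)" by (rule gen2)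
    show ?thesis unfolding R unfolding E_def eta1_exp eta2_exp ik G using S by simp
  next
    assume ik: "i = 3"
    have U: "uhlF e x y i = (ell x y 3 1)\<^sup>2 / (e 3 - e 1) + (ell x y 3 2)\<^sup>2 / (e 3 - e 2) + (ell x y 3 4)\<^sup>2 / (e 3 - e 4)"
      unfolding uhlF_def four_set ik by (simp add: insert_Diff_if)
    have Pr: "(\<Prod>j\<in>{1..4} - {i}. (e i - e j)) = (e 3 - e 1) * (e 3 - e 2) * (e 3 - e 4)"
      unfolding four_set ik by (simp add: insert_Diff_if)
    have sw: "ell x y 3 1 = - ell x y 1 3" "ell x y 3 2 = - ell x y 2 3" by (simp_all add: ell_def)
    have R: "uhlF e x y i * (\<Prod>j\<in>{1..4} - {i}. (e i - e j)) = (ell x y 1 3)\<^sup>2 * (((e 3) - (e 2)) * ((e 3) - (e 4))) + (ell x y 2 3)\<^sup>2 * (((e 3) - (e 1)) * ((e 3) - (e 4))) + (ell x y 3 4)\<^sup>2 * (((e 3) - (e 1)) * ((e 3) - (e 2)))"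
      unfolding U Pr sw using d12 by (simp add: alg)
    have G: "((ell x y 1 2)\<^sup>2 * ((e 3) * (e 4))+(ell x y 1 3)\<^sup>2 * ((e 2) * (e 4))+(ell x y 1 4)\<^sup>2 * ((e 2) * (e 3))+(ell x y 2 3)\<^sup>2 * ((e 1) * (e 4))+(ell x y 2 4)\<^sup>2 * ((e 1) * (e 3))+(ell x y 3 4)\<^sup>2 * ((e 1) * (e 2))) - (e 3) * (((ell x y 1 2)\<^sup>2 * ((e 3) + (e 4))+(ell x y 1 3)\<^sup>2 * ((e 2) + (e 4))+(ell x y 1 4)\<^sup>2 * ((e 2) + (e 3))+(ell x y 2 3)\<^sup>2 * ((e 1) + (e 4))+(ell x y 2 4)\<^sup>2 * ((e 1) + (e 3))+(ell x y 3 4)\<^sup>2 * ((e 1) + (e 2))) - (e 3)) = (ell x y 1 3)\<^sup>2 * (((e 3) - (e 2)) * ((e 3) - (e 4))) + (ell x y 2 3)\<^sup>2 * (((e 3) - (e 1)) * ((e 3) - (e 4))) + (ell x y 3 4)\<^sup>2 * (((e 3) - (e 1)) * ((e 3) - (e 2))) - (e 3)\<^sup>2 * ((ell x y 1 2)\<^sup>2+(ell x y 1 3)\<^sup>2+(ell x y 1 4)\<^sup>2+(ell x y 2 3)\<^sup>2+(ell x y 2 4)\<^sup>2+(ell x y 3 4)\<^sup>2 - 1)" by (rule gen3)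
    show ?thesis unfolding R unfolding E_def eta1_exp eta2_exp ik G using S by simp
  next
    assume ik: "i = 4"
    have U: "uhlF e x y i = (ell x y 4 1)\<^sup>2 / (e 4 - e 1) + (ell x y 4 2)\<^sup>2 / (e 4 - e 2) + (ell x y 4 3)\<^sup>2 / (e 4 - e 3)"
      unfolding uhlF_def four_set ik by (simp add: insert_Diff_if)
    have Pr: "(\<Prod>j\<in>{1..4} - {i}. (e i - e j)) = (e 4 - e 1) * (e 4 - e 2) * (e 4 - e 3)"
      unfolding four_set ik by (simp add: insert_Diff_if)
    have sw: "ell x y 4 1 = - ell x y 1 4" "ell x y 4 2 = - ell x y 2 4" "ell x y 4 3 = - ell x y 3 4" by (simp_all add: ell_def)
    have R: "uhlF e x y i * (\<Prod>j\<in>{1..4} - {i}. (e i - e j)) = (ell x y 1 4)\<^sup>2 * (((e 4) - (e 2)) * ((e 4) - (e 3))) + (ell x y 2 4)\<^sup>2 * (((e 4) - (e 1)) * ((e 4) - (e 3))) + (ell x y 3 4)\<^sup>2 * (((e 4) - (e 1)) * ((e 4) - (e 2)))"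
      unfolding U Pr sw using d12 by (simp add: alg)
    have G: "((ell x y 1 2)\<^sup>2 * ((e 3) * (e 4))+(ell x y 1 3)\<^sup>2 * ((e 2) * (e 4))+(ell x y 1 4)\<^sup>2 * ((e 2) * (e 3))+(ell x y 2 3)\<^sup>2 * ((e 1) * (e 4))+(ell x y 2 4)\<^sup>2 * ((e 1) * (e 3))+(ell x y 3 4)\<^sup>2 * ((e 1) * (e 2))) - (e 4) * (((ell x y 1 2)\<^sup>2 * ((e 3) + (e 4))+(ell x y 1 3)\<^sup>2 * ((e 2) + (e 4))+(ell x y 1 4)\<^sup>2 * ((e 2) + (e 3))+(ell x y 2 3)\<^sup>2 * ((e 1) + (e 4))+(ell x y 2 4)\<^sup>2 * ((e 1) + (e 3))+(ell x y 3 4)\<^sup>2 * ((e 1) + (e 2))) - (e 4)) = (ell x y 1 4)\<^sup>2 * (((e 4) - (e 2)) * ((e 4) - (e 3))) + (ell x y 2 4)\<^sup>2 * (((e 4) - (e 1)) * ((e 4) - (e 3))) + (ell x y 3 4)\<^sup>2 * (((e 4) - (e 1)) * ((e 4) - (e 2))) - (e 4)\<^sup>2 * ((ell x y 1 2)\<^sup>2+(ell x y 1 3)\<^sup>2+(ell x y 1 4)\<^sup>2+(ell x y 2 3)\<^sup>2+(ell x y 2 4)\<^sup>2+(ell x y 3 4)\<^sup>2 - 1)" by (rule gen4)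
    show ?thesis unfolding R unfolding E_def eta1_exp eta2_exp ik G using S by simp
  qed
  have P: "(\<Prod>j\<in>{1..4} - {i}. (e i - e j)) \<noteq> 0"
    using ii d12 unfolding four_set by (elim disjE) (simp_all add: insert_Diff_if)
  show ?thesis using key P unfolding E_def by simp
qed

end
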